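(* There exists a full amicable orthogonal design $AOD\big(72;\ 18,54;\ 72\big)$.
   Context: An orthogonal design $OD(m;c_1,\ldots,c_k)$ is an $m\times m$ matrix $X$ with entries from $\{0,\pm x_1,\ldots,\pm x_k\}$, where $x_1,\ldots,x_k$ are commuting indeterminates, such that $XX^{\rm T}=(\sum_j c_jx_j^2)I_m$. An amicable orthogonal design $AOD(m;c_1,\ldots,c_k;d_1,\ldots,d_\ell)$ is a pair $(X;Y)$ where $X$ is an $OD(m;c_1,\ldots,c_k)$ in indeterminates $x_1,\ldots,x_k$, $Y$ is an $OD(m;d_1,\ldots,d_\ell)$ in indeterminates $y_1,\ldots,y_\ell$ disjoint from the $x_i$, and $XY^{\rm T}=YX^{\rm T}$. It is full if neither $X$ nor $Y$ has a zero entry. *)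

theory Defs
  imports Main Complex_Main
begin

text \<open>A design matrix of order m in k indeterminates: entry (i,j) is a pair (s, t)
  with s in {-1,0,1} and t < k, standing for the entry s * x_t (0 if s = 0).\<close>
type_synonym design = "nat \<Rightarrow> nat \<Rightarrow> int \<times> nat"

definition entry_ok :: "nat \<Rightarrow> int \<times> nat \<Rightarrow> bool" where
  "entry_ok k e \<longleftrightarrow> fst e \<in> {-1, 0, 1} \<and> snd e < k"

definition deval :: "design \<Rightarrow> (nat \<Rightarrow> real) \<Rightarrow> nat \<Rightarrow> nat \<Rightarrow> real" where
  "deval D x i j = of_int (fst (D i j)) * x (snd (D i j))"

text \<open>The polynomial identity
  X X^T = (sum c_j x_j^2) I is expressed as an identity for all real values of the
  indeterminates (equivalent, since R is infinite).\<close>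
definition is_OD :: "nat \<Rightarrow> nat list \<Rightarrow> design \<Rightarrow> bool" where
  "is_OD m c D \<longleftrightarrow>
     (\<forall>i<m. \<forall>j<m. entry_ok (length c) (D i j)) \<and>
     (\<forall>x::nat \<Rightarrow> real. \<forall>i<m. \<forall>j<m.
        (\<Sum>l<m. deval D x i l * deval D x j l) =
        (if i = j then (\<Sum>t<length c. real (c ! t) * (x t)\<^sup>2) else 0))"

definition is_AOD :: "nat \<Rightarrow> nat list \<Rightarrow> nat list \<Rightarrow> design \<Rightarrow> design \<Rightarrow> bool" where
  "is_AOD m c d X Y \<longleftrightarrow>
     is_OD m c X \<and> is_OD m d Y \<and>
     (\<forall>x y :: nat \<Rightarrow> real. \<forall>i<m. \<forall>j<m.
        (\<Sum>l<m. deval X x i l * deval Y y j l) =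
        (\<Sum>l<m. deval Y y i l * deval X x j l))"

definition is_full_AOD :: "nat \<Rightarrow> nat list \<Rightarrow> nat list \<Rightarrow> design \<Rightarrow> design \<Rightarrow> bool" where
  "is_full_AOD m c d X Y \<longleftrightarrow>
     is_AOD m c d X Y \<and> (\<forall>i<m. \<forall>j<m. fst (X i j) \<noteq> 0 \<and> fst (Y i j) \<noteq> 0)"

end

theory Submission
  imports Defs
begin

definition W :: "nat \<Rightarrow> nat \<Rightarrow> int" where
  "W s r = (if s = r then 0 else if s = 0 \<or> r = 0 then 1
     else if (r + 17 - s) mod 17 \<in> {1,2,4,8,9,13,15,16} then 1 else -1)"

definition dl :: "nat \<Rightarrow> nat \<Rightarrow> int" where "dl s r = (if s = r then 1 else 0)"

definition mat4 :: "int list list \<Rightarrow> nat \<Rightarrow> nat \<Rightarrow> int" where "mat4 L b a = L ! b ! a"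

definition "I4 = mat4 [[1,0,0,0],[0,1,0,0],[0,0,1,0],[0,0,0,1]]"
definition "J4 = mat4 [[0,1,0,0],[-1,0,0,0],[0,0,0,1],[0,0,-1,0]]"
definition "S4 = mat4 [[0,1,1,1],[-1,0,1,-1],[-1,-1,0,1],[-1,1,-1,0]]"
definition "JS = mat4 [[-1, 0, 1, -1], [0, -1, -1, -1], [-1, 1, -1, 0], [1, 1, 0, -1]]"
definition "H4 = mat4 [[1, 1, 1, 1], [1, 1, -1, -1], [1, -1, -1, 1], [1, -1, 1, -1]]"
definition "JH = mat4 [[1, 1, -1, -1], [-1, -1, -1, -1], [1, -1, 1, -1], [-1, 1, 1, -1]]"

definition blk :: "(nat\<Rightarrow>nat\<Rightarrow>int) \<Rightarrow> (nat\<Rightarrow>nat\<Rightarrow>int) \<Rightarrow> nat \<Rightarrow> nat \<Rightarrow> int" where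
  "blk U V i j = dl (i div 4) (j div 4) * U (i mod 4) (j mod 4) + W (i div 4) (j div 4) * V (i mod 4) (j mod 4)"

definition c1 :: "(nat\<Rightarrow>nat\<Rightarrow>int) \<Rightarrow> (nat\<Rightarrow>nat\<Rightarrow>int) \<Rightarrow> (nat\<Rightarrow>nat\<Rightarrow>int) \<Rightarrow> (nat\<Rightarrow>nat\<Rightarrow>int) \<Rightarrow> nat \<Rightarrow> nat \<Rightarrow> int" where
  "c1 U1 U2 V1 V2 b c = (\<Sum>a<4. U1 b a * V1 c a + 17 * (U2 b a * V2 c a))"
definition c2 :: "(nat\<Rightarrow>nat\<Rightarrow>int) \<Rightarrow> (nat\<Rightarrow>nat\<Rightarrow>int) \<Rightarrow> (nat\<Rightarrow>nat\<Rightarrow>int) \<Rightarrow> (nat\<Rightarrow>nat\<Rightarrow>int) \<Rightarrow> nat \<Rightarrow> nat \<Rightarrow> int" where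
  "c2 U1 U2 V1 V2 b c = (\<Sum>a<4. U1 b a * V2 c a + U2 b a * V1 c a)"

lemma L18: "{..<18::nat} = set [0..<18]" by auto
lemma L4: "{..<4::nat} = set [0..<4]" by auto
lemma all18: "(\<forall>s<(18::nat). P s) \<longleftrightarrow> (\<forall>s\<in>set [0..<18]. P s)" by auto
lemma all4: "(\<forall>s<(4::nat). P s) \<longleftrightarrow> (\<forall>s\<in>set [0..<4]. P s)" by auto
lemma sum18: "(\<Sum>r<(18::nat). f r) = sum_list (map f [0..<18])"
  by (simp add: sum_list_distinct_conv_sum_set L18)
lemma sum4: "(\<Sum>r<(4::nat). f r) = sum_list (map f [0..<4])"
  by (simp add: sum_list_distinct_conv_sum_set L4)

lemma W_orth_all: "\<forall>s<18. \<forall>t<18. (\<Sum>r<18. W s r * W t r) = 17 * dl s t"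
  unfolding all18 sum18 by (simp add: W_def dl_def upt_rec)

lemma W_sym_all: "\<forall>s<18. \<forall>t<18. W s t = W t s"
  unfolding all18 by (simp add: W_def upt_rec)

lemma W_pm: "s \<noteq> t \<Longrightarrow> W s t = 1 \<or> W s t = -1"
  by (simp add: W_def)

lemma W_diag: "W s s = 0" by (simp add: W_def)

lemma small: "\<forall>b<4. \<forall>a<4. I4 b a \<in> {-1,0,1} \<and> S4 b a \<in> {-1,0,1} \<and> I4 b a * S4 b a = 0
   \<and> (I4 b a \<noteq> 0 \<or> S4 b a \<noteq> 0) \<and> J4 b a \<in> {-1,0,1} \<and> JS b a \<in> {-1,0,1}
   \<and> J4 b a * JS b a = 0 \<and> (J4 b a \<noteq> 0 \<or> JS b a \<noteq> 0)
   \<and> (H4 b a = 1 \<or> H4 b a = -1) \<and> (JH b a = 1 \<or> JH b a = -1)"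
  unfolding all4 by (simp add: I4_def J4_def S4_def JS_def H4_def JH_def mat4_def upt_rec)

lemma cvals: "\<forall>b<4. \<forall>c<4.
   c1 I4 J4 I4 J4 b c = 18 * dl b c \<and> c2 I4 J4 I4 J4 b c = 0 \<and>
   c1 S4 JS S4 JS b c = 54 * dl b c \<and> c2 S4 JS S4 JS b c = 0 \<and>
   c1 I4 J4 S4 JS b c + c1 S4 JS I4 J4 b c = 0 \<and> c2 I4 J4 S4 JS b c + c2 S4 JS I4 J4 b c = 0 \<and>
   c1 H4 JH H4 JH b c = 72 * dl b c \<and> c2 H4 JH H4 JH b c = 0 \<and>
   c1 I4 J4 H4 JH b c = c1 H4 JH I4 J4 b c \<and> c2 I4 J4 H4 JH b c = c2 H4 JH I4 J4 b c \<and>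
   c1 S4 JS H4 JH b c = c1 H4 JH S4 JS b c \<and> c2 S4 JS H4 JH b c = c2 H4 JH S4 JS b c"
  unfolding all4 by (simp add: c1_def c2_def sum4 I4_def J4_def S4_def JS_def H4_def JH_def mat4_def dl_def upt_rec)


lemma sum72: "(\<Sum>l<(72::nat). f l) = (\<Sum>r<18. \<Sum>a<4. f (4*r+a))"
proof -
  have "(\<Sum>l<(72::nat). f l) = (\<Sum>r<18. sum f {r*4..<r*4+4})"
    using sum.nat_group[of f 4 18] by simp
  also have "\<dots> = (\<Sum>r<18. \<Sum>a<4. f (4*r+a))"
  proof (rule sum.cong[OF refl])
    fix r :: nat
    have "sum f {0 + r*4..<4 + r*4} = (\<Sum>a=0..<4. f (a + r*4))"
      by (rule sum.shift_bounds_nat_ivl)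
    then show "sum f {r*4..<r*4+4} = (\<Sum>a<4. f (4*r+a))"
      by (simp add: lessThan_atLeast0 add.commute mult.commute)
  qed
  finally show ?thesis .
qed

lemma sep: "(\<Sum>r<(18::nat). \<Sum>a<(4::nat). (A1 r * u1 a + A2 r * u2 a) * (B1 r * v1 a + B2 r * v2 a)) =
  (\<Sum>r<18. A1 r*B1 r)*(\<Sum>a<4. u1 a*v1 a) + (\<Sum>r<18. A1 r*B2 r)*(\<Sum>a<4. u1 a*v2 a)
  + (\<Sum>r<18. A2 r*B1 r)*(\<Sum>a<4. u2 a*v1 a) + (\<Sum>r<18. A2 r*B2 r)*(\<Sum>a<4. u2 a*v2 (a::nat)::int)"
  by (simp add: algebra_simps sum.distrib sum_distrib_left sum_distrib_right)

lemma dl_sum1: "s < 18 \<Longrightarrow> (\<Sum>r<(18::nat). dl s r * X r) = X s"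
proof -
  assume "s < 18"
  have "(\<Sum>r<(18::nat). dl s r * X r) = (\<Sum>r<(18::nat). if r = s then X s else 0)"
    by (rule sum.cong) (auto simp: dl_def)
  then show ?thesis using \<open>s < 18\<close> by simp
qed
lemma dl_sum2: "s < 18 \<Longrightarrow> (\<Sum>r<(18::nat). X r * dl s r) = X s"
  using dl_sum1[of s X] by (simp add: mult.commute)
lemma dl_sym: "dl t s = dl s t" by (simp add: dl_def)

lemma prod_blk:
  assumes "i < 72" "j < 72"
  shows "(\<Sum>l<72. blk U1 U2 i l * blk V1 V2 j l) =
     dl (i div 4) (j div 4) * c1 U1 U2 V1 V2 (i mod 4) (j mod 4) + W (i div 4) (j div 4) * c2 U1 U2 V1 V2 (i mod 4) (j mod 4)"
proof -
  define s where "s = i div 4"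
  define t where "t = j div 4"
  define b where "b = i mod 4"
  define c where "c = j mod 4"
  have s: "s < 18" and t: "t < 18" using assms by (auto simp: s_def t_def)
  have "(\<Sum>l<72. blk U1 U2 i l * blk V1 V2 j l) =
     (\<Sum>r<18. \<Sum>a<4. (dl s r * U1 b a + W s r * U2 b a) * (dl t r * V1 c a + W t r * V2 c a))"
    unfolding sum72
  proof (intro sum.cong refl)
    fix r a :: nat assume "a \<in> {..<4}"
    then have "(4*r+a) div 4 = r" "(4*r+a) mod 4 = a" by auto
    then show "blk U1 U2 i (4 * r + a) * blk V1 V2 j (4 * r + a) =
        (dl s r * U1 b a + W s r * U2 b a) * (dl t r * V1 c a + W t r * V2 c a)"
      by (simp add: blk_def s_def t_def b_def c_def)
  qed
  also have "\<dots> = dl s t * (\<Sum>a<4. U1 b a * V1 c a) + W t s * (\<Sum>a<4. U1 b a * V2 c a)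
     + W s t * (\<Sum>a<4. U2 b a * V1 c a) + 17 * dl s t * (\<Sum>a<4. U2 b a * V2 c a)"
  proof -
    have e1: "(\<Sum>r<18. dl s r * dl t r) = dl s t"
      using dl_sum1[OF s, of "\<lambda>r. dl t r"] by (simp add: dl_def)
    have e2: "(\<Sum>r<18. dl s r * W t r) = W t s"
      using dl_sum1[OF s, of "\<lambda>r. W t r"] by simp
    have e3: "(\<Sum>r<18. W s r * dl t r) = W s t"
      using dl_sum2[OF t, of "\<lambda>r. W s r"] by simp
    have e4: "(\<Sum>r<18. W s r * W t r) = 17 * dl s t"
      using W_orth_all s t by simp
    show ?thesis unfolding sep e1 e2 e3 e4 by (simp add: algebra_simps)
  qed
  also have "\<dots> = dl s t * c1 U1 U2 V1 V2 b c + W s t * c2 U1 U2 V1 V2 b c"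
    using s t W_sym_all by (simp add: c1_def c2_def sum.distrib sum_distrib_left algebra_simps)
  finally show ?thesis by (simp add: s_def t_def b_def c_def)
qed


lemma pw:
  assumes "i < 72" "j < 72"
  shows "blk I4 J4 i j \<in> {-1,0,1} \<and> blk S4 JS i j \<in> {-1,0,1} \<and> blk I4 J4 i j * blk S4 JS i j = 0
    \<and> (blk I4 J4 i j \<noteq> 0 \<or> blk S4 JS i j \<noteq> 0) \<and> (blk H4 JH i j = 1 \<or> blk H4 JH i j = -1)"
proof -
  define b where "b = i mod 4"
  define a where "a = j mod 4"
  have "b < 4" "a < 4" by (auto simp: a_def b_def)
  note sm = small[rule_format, OF this]
  show ?thesis
  proof (cases "i div 4 = j div 4")
    case True
    then have e: "blk U V i j = U b a" for U V by (simp add: blk_def dl_def W_diag a_def b_def)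
    show ?thesis unfolding e using sm by blast
  next
    case False
    then have e: "blk U V i j = W (i div 4) (j div 4) * V b a" for U V by (simp add: blk_def dl_def a_def b_def)
    from False have "W (i div 4) (j div 4) = 1 \<or> W (i div 4) (j div 4) = -1" by (rule W_pm)
    then show ?thesis
    proof
      assume w: "W (i div 4) (j div 4) = 1"
      show ?thesis unfolding e w using sm by simp
    next
      assume w: "W (i div 4) (j div 4) = -1"
      show ?thesis unfolding e w using sm by auto
    qed
  qed
qed

lemma dd: "dl (i div 4) (j div 4) * dl (i mod 4) (j mod 4) = (if i = j then 1 else (0::int))"
proof -
  have "i div 4 = j div 4 \<Longrightarrow> i mod 4 = j mod 4 \<Longrightarrow> i = j"
    by (metis div_mult_mod_eq)
  then show ?thesis by (auto simp: dl_def)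
qed


lemma PP: "i < 72 \<Longrightarrow> j < 72 \<Longrightarrow> (\<Sum>l<72. blk I4 J4 i l * blk I4 J4 j l) = 18 * (if i = j then 1 else 0)"
  using cvals[rule_format, of "i mod 4" "j mod 4"] by (simp add: prod_blk dd[symmetric])
lemma QQ: "i < 72 \<Longrightarrow> j < 72 \<Longrightarrow> (\<Sum>l<72. blk S4 JS i l * blk S4 JS j l) = 54 * (if i = j then 1 else 0)"
  using cvals[rule_format, of "i mod 4" "j mod 4"] by (simp add: prod_blk dd[symmetric])
lemma HH: "i < 72 \<Longrightarrow> j < 72 \<Longrightarrow> (\<Sum>l<72. blk H4 JH i l * blk H4 JH j l) = 72 * (if i = j then 1 else 0)"
  using cvals[rule_format, of "i mod 4" "j mod 4"] by (simp add: prod_blk dd[symmetric])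
lemma PQ: "i < 72 \<Longrightarrow> j < 72 \<Longrightarrow> (\<Sum>l<72. blk I4 J4 i l * blk S4 JS j l) + (\<Sum>l<72. blk S4 JS i l * blk I4 J4 j l) = 0"
proof -
  assume a: "i < 72" "j < 72"
  have "dl (i div 4) (j div 4) * (c1 I4 J4 S4 JS (i mod 4) (j mod 4) + c1 S4 JS I4 J4 (i mod 4) (j mod 4))
      + W (i div 4) (j div 4) * (c2 I4 J4 S4 JS (i mod 4) (j mod 4) + c2 S4 JS I4 J4 (i mod 4) (j mod 4)) = 0"
    using cvals[rule_format, of "i mod 4" "j mod 4"] by simp
  then show ?thesis unfolding prod_blk[OF a] by (simp only: ring_distribs)
qed
lemma PH: "i < 72 \<Longrightarrow> j < 72 \<Longrightarrow> (\<Sum>l<72. blk I4 J4 i l * blk H4 JH j l) = (\<Sum>l<72. blk H4 JH i l * blk I4 J4 j l)"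
  using cvals[rule_format, of "i mod 4" "j mod 4"] by (simp add: prod_blk)
lemma QH: "i < 72 \<Longrightarrow> j < 72 \<Longrightarrow> (\<Sum>l<72. blk S4 JS i l * blk H4 JH j l) = (\<Sum>l<72. blk H4 JH i l * blk S4 JS j l)"
  using cvals[rule_format, of "i mod 4" "j mod 4"] by (simp add: prod_blk)

definition Xd :: design where
  "Xd i j = (if blk I4 J4 i j \<noteq> 0 then (blk I4 J4 i j, 0) else (blk S4 JS i j, 1))"
definition Yd :: design where "Yd i j = (blk H4 JH i j, 0)"

lemma devX: "i < 72 \<Longrightarrow> j < 72 \<Longrightarrow> deval Xd x i j = of_int (blk I4 J4 i j) * x 0 + of_int (blk S4 JS i j) * x 1"
  using pw[of i j] by (auto simp: deval_def Xd_def)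
lemma devY: "deval Yd y i j = of_int (blk H4 JH i j) * y 0"
  by (simp add: deval_def Yd_def)

lemma expand: "(\<Sum>l\<in>A. (of_int (p l) * a + of_int (q l) * b) * (of_int (p' l) * a + of_int (q' l) * b)) =
  of_int (\<Sum>l\<in>A. p l * p' l) * a^2 + (of_int (\<Sum>l\<in>A. p l * q' l) + of_int (\<Sum>l\<in>A. q l * p' l)) * (a*b)
  + of_int (\<Sum>l\<in>A. q l * q' l) * (b::real)^2"
  by (simp add: algebra_simps sum.distrib sum_distrib_left sum_distrib_right power2_eq_square)

theorem mainTheorem4:
  shows "\<exists>X Y. is_full_AOD 72 [18, 54] [72] X Y"
proof (intro exI)
  have e1: "\<forall>i<72. \<forall>j<72. entry_ok (length [18,54::nat]) (Xd i j)"
    using pw by (auto simp: entry_ok_def Xd_def)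
  have e2: "\<forall>i<72. \<forall>j<72. entry_ok (length [72::nat]) (Yd i j)"
    using pw by (auto simp: entry_ok_def Yd_def)
  have o1: "(\<Sum>l<72. deval Xd x i l * deval Xd x j l) =
        (if i = j then (\<Sum>t<length [18,54::nat]. real ([18,54] ! t) * (x t)\<^sup>2) else 0)"
    if "i < 72" "j < 72" for x i j
  proof -
    have "(\<Sum>l<72. deval Xd x i l * deval Xd x j l) = (\<Sum>l<72.
      (of_int (blk I4 J4 i l) * x 0 + of_int (blk S4 JS i l) * x 1) * (of_int (blk I4 J4 j l) * x 0 + of_int (blk S4 JS j l) * x 1))"
      using that by (intro sum.cong) (auto simp: devX)
    also have "\<dots> = (if i = j then 18 * (x 0)^2 + 54 * (x 1)^2 else 0)"
      unfolding expand using that PP[OF that] QQ[OF that] PQ[OF that]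
      by (simp del: of_int_sum add: of_int_add[symmetric])
    also have "\<dots> = (if i = j then (\<Sum>t<length [18,54::nat]. real ([18,54] ! t) * (x t)\<^sup>2) else 0)"
      by (simp add: numeral_2_eq_2)
    finally show ?thesis .
  qed
  have o2: "(\<Sum>l<72. deval Yd y i l * deval Yd y j l) =
        (if i = j then (\<Sum>t<length [72::nat]. real ([72] ! t) * (y t)\<^sup>2) else 0)"
    if "i < 72" "j < 72" for y i j
  proof -
    have "(\<Sum>l<72. deval Yd y i l * deval Yd y j l) = of_int (\<Sum>l<72. blk H4 JH i l * blk H4 JH j l) * (y 0)^2"
      unfolding devY power2_eq_square of_int_sum of_int_mult sum_distrib_right by (simp add: mult_ac)
    then show ?thesis using HH[OF that] by simp
  qed
  have am: "(\<Sum>l<72. deval Xd x i l * deval Yd y j l) = (\<Sum>l<72. deval Yd y i l * deval Xd x j l)"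
    if "i < 72" "j < 72" for x y i j
  proof -
    have "(\<Sum>l<72. deval Xd x i l * deval Yd y j l) =
       (\<Sum>l<72. (of_int (blk I4 J4 i l) * x 0 + of_int (blk S4 JS i l) * x 1) * (of_int (blk H4 JH j l) * y 0))"
      using that by (intro sum.cong) (auto simp: devX devY)
    also have "\<dots> = of_int (\<Sum>l<72. blk I4 J4 i l * blk H4 JH j l) * (x 0 * y 0) + of_int (\<Sum>l<72. blk S4 JS i l * blk H4 JH j l) * (x 1 * y 0)"
      by (simp add: algebra_simps sum.distrib sum_distrib_left sum_distrib_right)
    also have "\<dots> = of_int (\<Sum>l<72. blk H4 JH i l * blk I4 J4 j l) * (x 0 * y 0) + of_int (\<Sum>l<72. blk H4 JH i l * blk S4 JS j l) * (x 1 * y 0)"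
      using PH[OF that] QH[OF that] by simp
    also have "\<dots> = (\<Sum>l<72. (of_int (blk H4 JH i l) * y 0) * (of_int (blk I4 J4 j l) * x 0 + of_int (blk S4 JS j l) * x 1))"
      by (simp add: algebra_simps sum.distrib sum_distrib_left sum_distrib_right)
    also have "\<dots> = (\<Sum>l<72. deval Yd y i l * deval Xd x j l)"
      using that by (intro sum.cong) (auto simp: devX devY)
    finally show ?thesis .
  qed
  have f1: "fst (Xd i j) \<noteq> 0" if "i < 72" "j < 72" for i j
    using pw[OF that] by (auto simp: Xd_def)
  have f2: "fst (Yd i j) \<noteq> 0" if "i < 72" "j < 72" for i j
    using pw[OF that] by (auto simp: Yd_def)
  show "is_full_AOD 72 [18, 54] [72] Xd Yd"
    unfolding is_full_AOD_def is_AOD_def is_OD_def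
    by (intro conjI allI impI; (rule e1[rule_format] e2[rule_format] o1 o2 am f1 f2; assumption))
qed

end
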